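(* Let $v_{max}\in\mathbb{N}$, $V=\{1,\ldots,v_{max}\}$, $b>0$ and $K>0$. Let $f_{mort}:V\to(0,1)$ be any function, and let $f_{mut}:\{-v_{max},\ldots,0,\ldots,v_{max}\}\to[0,1]$ satisfy: $f_{mut}(-u)=f_{mut}(u)$ for all $u$; $u\mapsto f_{mut}(u)$ is decreasing for $u\geq 0$; and $\sum_{u=-v_{max}}^{v_{max}} f_{mut}(u)=1$. Let $P_0:V\to[0,\infty)$ and define $P_n:V\to[0,\infty)$ recursively by $$P_{n+1}(v)=(1-f_{mort}(v))P_n(v)+b\,(P_n\star f_{mut})(v)\left(1-\frac{\|P_n\|_1}{K}\right)\mathbf{1}_{[0,K]}(\|P_n\|_1),\qquad v=1,\ldots,v_{max},$$ where $(P_n\star f_{mut})(v)=\sum_{u=1}^{v_{max}}P_n(u)f_{mut}(v-u)$, $\|P_n\|_1=\sum_{v=1}^{v_{max}}P_n(v)$, and $\mathbf{1}_{[0,K]}$ is the indicator function of $[0,K]$. Define $F_{mut}(u)=\sum_{v=1}^{v_{max}}f_{mut}(v-u)$ for $u=1,\ldots,v_{max}$. If $$\|1-f_{mort}\|_\infty+b\|F_{mut}\|_\infty\leq 1,$$ where $\|1-f_{mort}\|_\infty=\max_{v\in V}(1-f_{mort}(v))$ and $\|F_{mut}\|_\infty=\max_u F_{mut}(u)$, then $\lim_{n\to\infty}\|P_n\|_1=0$.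
   Context: This is a discrete population model (a Verhulst-type model with a trait): $P_n(v)$ is the number of individuals in generation $n$ with trait value $v$, $b$ is the birth rate, $K$ the environmental capacity, $f_{mort}$ the trait-dependent mortality rate and $f_{mut}$ the mutation distribution. *)

theory Defs
  imports "HOL-Analysis.Analysis"
begin

definition l1norm :: "nat \<Rightarrow> (nat \<Rightarrow> real) \<Rightarrow> real" where
  "l1norm vmax P = (\<Sum>v=1..vmax. P v)"

definition conv_mut :: "nat \<Rightarrow> (nat \<Rightarrow> real) \<Rightarrow> (int \<Rightarrow> real) \<Rightarrow> nat \<Rightarrow> real" where
  "conv_mut vmax P fmut v = (\<Sum>u=1..vmax. P u * fmut (int v - int u))"

definition indic_0K :: "real \<Rightarrow> real \<Rightarrow> real" where
  "indic_0K K x = (if 0 \<le> x \<and> x \<le> K then 1 else 0)"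

primrec pop :: "nat \<Rightarrow> real \<Rightarrow> real \<Rightarrow> (nat \<Rightarrow> real) \<Rightarrow> (int \<Rightarrow> real)
    \<Rightarrow> (nat \<Rightarrow> real) \<Rightarrow> nat \<Rightarrow> nat \<Rightarrow> real" where
  "pop vmax b K fmort fmut P0 0 = P0"
| "pop vmax b K fmort fmut P0 (Suc n) =
     (\<lambda>v. (1 - fmort v) * pop vmax b K fmort fmut P0 n v
          + b * conv_mut vmax (pop vmax b K fmort fmut P0 n) fmut v
              * (1 - l1norm vmax (pop vmax b K fmort fmut P0 n) / K)
              * indic_0K K (l1norm vmax (pop vmax b K fmort fmut P0 n)))"

definition Fmut :: "nat \<Rightarrow> (int \<Rightarrow> real) \<Rightarrow> nat \<Rightarrow> real" where
  "Fmut vmax fmut u = (\<Sum>v=1..vmax. fmut (int v - int u))"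

end

theory Submission
  imports Defs
begin

theorem theorem2p2:
  fixes vmax :: nat and b K :: real
    and fmort :: "nat \<Rightarrow> real" and fmut :: "int \<Rightarrow> real" and P0 :: "nat \<Rightarrow> real"
  assumes vmax_pos: "vmax \<ge> 1"
    and b_pos: "b > 0" and K_pos: "K > 0"
    and fmort_range: "\<And>v. v \<in> {1..vmax} \<Longrightarrow> 0 < fmort v \<and> fmort v < 1"
    and fmut_range: "\<And>u. u \<in> {-int vmax..int vmax} \<Longrightarrow> 0 \<le> fmut u \<and> fmut u \<le> 1"
    and fmut_sym: "\<And>u. u \<in> {-int vmax..int vmax} \<Longrightarrow> fmut (-u) = fmut u"
    and fmut_decr: "\<And>u w. 0 \<le> u \<Longrightarrow> u \<le> w \<Longrightarrow> w \<le> int vmax \<Longrightarrow> fmut w \<le> fmut u"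
    and fmut_sum: "(\<Sum>u=-int vmax..int vmax. fmut u) = 1"
    and P0_nonneg: "\<And>v. v \<in> {1..vmax} \<Longrightarrow> P0 v \<ge> 0"
    and cond: "(MAX v\<in>{1..vmax}. 1 - fmort v) + b * (MAX u\<in>{1..vmax}. Fmut vmax fmut u) \<le> 1"
  shows "(\<lambda>n. l1norm vmax (pop vmax b K fmort fmut P0 n)) \<longlonglongrightarrow> 0"
proof -
  define P where "P n = pop vmax b K fmort fmut P0 n" for n
  define N where "N n = l1norm vmax (P n)" for n
  define m where "m = (MAX v\<in>{1..vmax}. 1 - fmort v)"
  define F where "F = (MAX u\<in>{1..vmax}. Fmut vmax fmut u)"
  have fm: "0 \<le> fmut (int v - int u)" if "v \<in> {1..vmax}" "u \<in> {1..vmax}" for u v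
    using fmut_range[of "int v - int u"] that by auto
  have conv_nn: "conv_mut vmax Q fmut v \<ge> 0"
    if "\<And>u. u \<in> {1..vmax} \<Longrightarrow> Q u \<ge> 0" "v \<in> {1..vmax}" for Q v
    unfolding conv_mut_def using that fm by (auto intro!: sum_nonneg)
  have Psuc: "P (Suc n) v = (1 - fmort v) * P n v + b * conv_mut vmax (P n) fmut v
      * (1 - N n / K) * indic_0K K (N n)" for n v
    by (simp add: P_def N_def)
  have nonneg: "\<forall>v\<in>{1..vmax}. P n v \<ge> 0" for n
  proof (induction n)
    case 0 then show ?case using P0_nonneg by (simp add: P_def)
  next
    case (Suc n)
    show ?case
    proof
      fix v assume v: "v \<in> {1..vmax}"
      have a: "(1 - fmort v) * P n v \<ge> 0" using fmort_range[OF v] Suc v by simp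
      have c: "conv_mut vmax (P n) fmut v \<ge> 0" using conv_nn Suc v by blast
      have d: "(1 - N n / K) * indic_0K K (N n) \<ge> 0"
        using K_pos by (auto simp: indic_0K_def field_simps)
      have "b * conv_mut vmax (P n) fmut v * ((1 - N n / K) * indic_0K K (N n)) \<ge> 0"
        using b_pos c d by (simp add: mult_nonneg_nonneg less_imp_le)
      then show "P (Suc n) v \<ge> 0" using a Psuc by (simp add: mult.assoc)
    qed
  qed
  have Nnn: "N n \<ge> 0" for n
    using nonneg unfolding N_def l1norm_def by (auto intro!: sum_nonneg)
  have m_ge: "1 - fmort v \<le> m" if "v \<in> {1..vmax}" for v
    unfolding m_def using that by (intro Max_ge) auto
  have m_lt: "m < 1"
  proof -
    have "m \<in> (\<lambda>v. 1 - fmort v) ` {1..vmax}"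
      unfolding m_def using vmax_pos by (intro Max_in) auto
    then show ?thesis using fmort_range by auto
  qed
  have F_ge: "Fmut vmax fmut u \<le> F" if "u \<in> {1..vmax}" for u
    unfolding F_def using that by (intro Max_ge) auto
  have fmut0: "fmut 0 > 0"
  proof (rule ccontr)
    assume "\<not> fmut 0 > 0"
    then have z: "fmut 0 = 0" using fmut_range[of 0] by auto
    have "fmut u = 0" if "u \<in> {-int vmax..int vmax}" for u
    proof (cases "u \<ge> 0")
      case True then show ?thesis using fmut_decr[of 0 u] fmut_range[of u] that z by auto
    next
      case False then show ?thesis
        using fmut_decr[of 0 "-u"] fmut_range[of u] fmut_sym[of u] that z by auto
    qed
    then have "(\<Sum>u=-int vmax..int vmax. fmut u) = 0" by simp
    with fmut_sum show False by simp
  qed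
  have F_pos: "F > 0"
  proof -
    have "fmut 0 \<le> Fmut vmax fmut 1" unfolding Fmut_def
    proof -
      have "(\<lambda>v. fmut (int v - int 1)) 1 \<le> (\<Sum>v=1..vmax. fmut (int v - int 1))"
        using vmax_pos fm[of _ 1] by (intro member_le_sum) auto
      then show "fmut 0 \<le> (\<Sum>v=1..vmax. fmut (int v - int (1::nat)))" by simp
    qed
    then show ?thesis using F_ge[of 1] vmax_pos fmut0 by auto
  qed
  have swap: "(\<Sum>v=1..vmax. conv_mut vmax Q fmut v) = (\<Sum>u=1..vmax. Q u * Fmut vmax fmut u)" for Q
    unfolding conv_mut_def Fmut_def by (subst sum.swap) (simp add: sum_distrib_left)
  have step: "N (Suc n) \<le> (if N n \<le> K then N n - b * F / K * (N n)^2 else m * N n)" for n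
  proof -
    have A: "(\<Sum>v=1..vmax. (1 - fmort v) * P n v) \<le> m * N n"
      unfolding N_def l1norm_def sum_distrib_left using m_ge nonneg
      by (intro sum_mono mult_right_mono) auto
    have B: "(\<Sum>v=1..vmax. conv_mut vmax (P n) fmut v) \<le> F * N n"
      unfolding swap N_def l1norm_def sum_distrib_left using F_ge nonneg
      by (intro sum_mono) (metis atLeastAtMost_iff mult.commute mult_left_mono)
    have eq: "N (Suc n) = (\<Sum>v=1..vmax. (1 - fmort v) * P n v)
       + b * (1 - N n / K) * indic_0K K (N n) * (\<Sum>v=1..vmax. conv_mut vmax (P n) fmut v)"
      unfolding N_def[of "Suc n"] l1norm_def Psuc sum.distrib sum_distrib_left
      by (auto intro!: sum.cong simp: ac_simps)
    show ?thesis
    proof (cases "N n \<le> K")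
      case True
      have c: "b * (1 - N n / K) \<ge> 0" using True K_pos b_pos by (simp add: field_simps)
      have e2: "N (Suc n) = (\<Sum>v=1..vmax. (1 - fmort v) * P n v)
       + b * (1 - N n / K) * (\<Sum>v=1..vmax. conv_mut vmax (P n) fmut v)"
        using eq True Nnn[of n] by (simp add: indic_0K_def)
      have "N (Suc n) \<le> m * N n + b * (1 - N n / K) * (F * N n)"
        unfolding e2 using A mult_left_mono[OF B c] by linarith
      also have "\<dots> = (m + b*F) * N n - b*F/K * (N n)^2"
        using K_pos by (simp add: field_simps power2_eq_square)
      also have "\<dots> \<le> N n - b*F/K*(N n)^2"
        using cond mult_right_mono[OF _ Nnn[of n], of "m + b*F" 1] unfolding m_def F_def by simp
      finally show ?thesis using True by simp
    next
      case False
      then have "N (Suc n) = (\<Sum>v=1..vmax. (1 - fmort v) * P n v)"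
        using eq by (simp add: indic_0K_def)
      then show ?thesis using A False by simp
    qed
  qed
  have bFK: "b * F / K > 0" using b_pos F_pos K_pos by simp
  have dec: "N (Suc n) \<le> N n" for n
  proof -
    have "b*F/K*(N n)^2 \<ge> 0" using bFK by (intro mult_nonneg_nonneg) auto
    moreover have "m * N n \<le> N n" using mult_right_mono[of m 1 "N n"] m_lt Nnn[of n] by simp
    ultimately show ?thesis using step[of n] by (auto split: if_splits)
  qed
  have mono: "N j \<le> N i" if "i \<le> j" for i j
    using lift_Suc_antimono_le[of N, OF dec that] .
  have small: "\<exists>n. N n < e" if e: "e > 0" for e
  proof (rule ccontr)
    assume "\<not> (\<exists>n. N n < e)"
    then have all: "N n \<ge> e" for n by (meson not_le)
    define c where "c = min (b*F/K*e^2) ((1-m)*K)"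
    have cpos: "c > 0" unfolding c_def using mult_pos_pos[OF bFK, of "e^2"] e m_lt K_pos by simp
    have st: "N (Suc n) \<le> N n - c" for n
    proof (cases "N n \<le> K")
      case True
      have "e^2 \<le> (N n)^2" using all[of n] e by (intro power_mono) auto
      then have "b*F/K*e^2 \<le> b*F/K*(N n)^2" using bFK by (intro mult_left_mono) auto
      then show ?thesis using step[of n] True unfolding c_def by auto
    next
      case False
      have "(1-m)*K \<le> (1-m) * N n" using False m_lt by simp
      then show ?thesis using step[of n] False unfolding c_def by (auto simp: algebra_simps)
    qed
    have lin: "N n \<le> N 0 - real n * c" for n
    proof (induction n)
      case 0 then show ?case by simp
    next
      case (Suc n) then show ?case using st[of n] by (simp add: algebra_simps)
    qed
    obtain n where "N 0 < real n * c" using cpos reals_Archimedean3 by blast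
    then show False using lin[of n] Nnn[of n] by simp
  qed
  show ?thesis
    unfolding lim_sequentially
  proof (intro allI impI)
    fix r :: real assume r: "r > 0"
    obtain n0 where "N n0 < r" using small[OF r] by blast
    then have "\<forall>n\<ge>n0. dist (N n) 0 < r" using mono Nnn by (auto intro: le_less_trans)
    then show "\<exists>no. \<forall>n\<ge>no. dist (l1norm vmax (pop vmax b K fmort fmut P0 n)) 0 < r"
      unfolding N_def P_def by blast
  qed
qed

end
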